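(* There is no bounded continuous function $w:\mathbb R^2\to\mathbb R^2$ for which there exists a constant $c>0$ such that \[\bigl|\langle x-y,w(x)-w(y)\rangle\bigr|>c\,\|w(x)-w(y)\|\] for every pair $x,y\in\mathbb R^2$ with $\|x-y\|>1$.
   Context: $\langle\cdot,\cdot\rangle$ and $\|\cdot\|$ denote the standard inner product and Euclidean norm on $\mathbb R^2$. *)

theory Defs
  imports "HOL-Analysis.Analysis"
begin

end

theory Submission
  imports Defs
begin

lemma cone:
  fixes w :: "real^2 \<Rightarrow> real^2"
  assumes c: "c > 0"
    and P: "\<And>x y. norm (x - y) > 1 \<Longrightarrow> (x - y) \<bullet> (w x - w y) > c * norm (w x - w y)"
    and h: "norm h > 1"
  shows "(c/2) * norm h * norm (w (x + h) - w x) \<le> h \<bullet> (w (x + h) - w x)"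
proof -
  define n where "n = nat \<lceil>norm h / 2\<rceil>"
  have nge: "real n \<ge> norm h / 2" unfolding n_def by linarith
  have n1: "n \<ge> 1" using nge h by (cases n) auto
  have nlt: "real n < norm h"
  proof (cases "norm h \<ge> 2")
    case True then show ?thesis unfolding n_def by linarith
  next
    case False
    then have "\<lceil>norm h / 2\<rceil> = 1" using h by (auto simp add: ceiling_eq_iff)
    then show ?thesis using h by (simp add: n_def)
  qed
  define h' where "h' = inverse (real n) *\<^sub>R h"
  have hh: "h = real n *\<^sub>R h'" using n1 by (simp add: h'_def)
  have nh': "norm h' > 1" using n1 nlt by (simp add: h'_def field_simps)
  define f where "f i = w (x + real i *\<^sub>R h')" for i :: nat
  define d where "d i = f (Suc i) - f i" for i
  have tel: "(\<Sum>i<n. d i) = w (x + h) - w x"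
    unfolding d_def using sum_lessThan_telescope[of f n] by (simp add: f_def hh)
  have each: "(c/2) * norm h * norm (d i) \<le> h \<bullet> d i" for i
  proof -
    have "(x + real (Suc i) *\<^sub>R h') - (x + real i *\<^sub>R h') = h'"
      by (simp add: algebra_simps)
    then have "h' \<bullet> d i > c * norm (d i)"
      using P[of "x + real (Suc i) *\<^sub>R h'" "x + real i *\<^sub>R h'"] nh' by (simp add: d_def f_def)
    then have "real n * (c * norm (d i)) \<le> real n * (h' \<bullet> d i)"
      by (intro mult_left_mono) auto
    moreover have "(c/2) * norm h * norm (d i) \<le> real n * (c * norm (d i))"
    proof -
      have "(norm h / 2) * (c * norm (d i)) \<le> real n * (c * norm (d i))"
        using nge c by (intro mult_right_mono) auto
      then show ?thesis by (simp add: algebra_simps)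
    qed
    ultimately show ?thesis by (simp add: hh)
  qed
  have "(c/2) * norm h * norm (w (x + h) - w x) \<le> (c/2) * norm h * (\<Sum>i<n. norm (d i))"
    unfolding tel[symmetric] using c by (intro mult_left_mono norm_sum) auto
  also have "\<dots> = (\<Sum>i<n. (c/2) * norm h * norm (d i))" by (simp add: sum_distrib_left)
  also have "\<dots> \<le> (\<Sum>i<n. h \<bullet> d i)" by (intro sum_mono each)
  also have "\<dots> = h \<bullet> (w (x + h) - w x)" unfolding tel[symmetric] by (rule inner_sum_right[symmetric])
  finally show ?thesis .
qed

definition rayA :: "(real^2 \<Rightarrow> real^2) \<Rightarrow> real^2 \<Rightarrow> real^2" where
  "rayA w a = lim (\<lambda>k. w (real (2*k) *\<^sub>R a))"

context
  fixes w :: "real^2 \<Rightarrow> real^2" and c M :: real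
  assumes c: "c > 0"
    and P: "\<And>x y. norm (x - y) > 1 \<Longrightarrow> (x - y) \<bullet> (w x - w y) > c * norm (w x - w y)"
    and M: "\<And>x. norm (w x) \<le> M"
begin

lemma ray_inc:
  assumes a: "norm a = 1"
  shows "incseq (\<lambda>k. a \<bullet> w (real (2*k) *\<^sub>R a))"
proof (rule incseq_SucI)
  fix k
  have e: "real (2 * Suc k) *\<^sub>R a - real (2 * k) *\<^sub>R a = 2 *\<^sub>R a"
    by (simp add: algebra_simps)
  have n2: "norm (2 *\<^sub>R a) > 1" using a by simp
  have "(2 *\<^sub>R a) \<bullet> (w (real (2 * Suc k) *\<^sub>R a) - w (real (2 * k) *\<^sub>R a))
      > c * norm (w (real (2 * Suc k) *\<^sub>R a) - w (real (2 * k) *\<^sub>R a))"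
    using P[of "real (2 * Suc k) *\<^sub>R a" "real (2 * k) *\<^sub>R a"] n2 unfolding e by blast
  moreover have "c * norm (w (real (2 * Suc k) *\<^sub>R a) - w (real (2 * k) *\<^sub>R a)) \<ge> 0"
    using c by simp
  ultimately have "(2 *\<^sub>R a) \<bullet> (w (real (2 * Suc k) *\<^sub>R a) - w (real (2 * k) *\<^sub>R a)) > 0"
    by linarith
  then show "a \<bullet> w (real (2*k) *\<^sub>R a) \<le> a \<bullet> w (real (2 * Suc k) *\<^sub>R a)"
    by (simp add: inner_diff_right)
qed

lemma ray_conv:
  assumes a: "norm a = 1"
  shows "(\<lambda>k. w (real (2*k) *\<^sub>R a)) \<longlonglongrightarrow> rayA w a"
proof -
  define G where "G k = a \<bullet> w (real (2*k) *\<^sub>R a)" for k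
  have inc: "incseq G" unfolding G_def[abs_def] by (rule ray_inc[OF a])
  have "G k \<le> M" for k
  proof -
    have "G k \<le> norm a * norm (w (real (2*k) *\<^sub>R a))" unfolding G_def by (rule norm_cauchy_schwarz)
    then show ?thesis using M[of "real (2*k) *\<^sub>R a"] a by simp
  qed
  then obtain L where L: "G \<longlonglongrightarrow> L" using incseq_convergent[OF inc] by blast
  have CG: "Cauchy G" using L convergent_Cauchy convergent_def by blast
  have key: "norm (w (real (2*m) *\<^sub>R a) - w (real (2*k) *\<^sub>R a)) \<le> (2/c) * (G m - G k)"
    if "k \<le> m" for k m
  proof (cases "k = m")
    case True then show ?thesis by simp
  next
    case False
    then have km: "k < m" using that by simp
    define h where "h = real (2*(m-k)) *\<^sub>R a"
    have nh: "norm h = real (2*(m-k))" using a by (simp add: h_def)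
    have nh1: "norm h > 1" using km nh by simp
    have xh: "real (2*k) *\<^sub>R a + h = real (2*m) *\<^sub>R a"
      using km by (simp add: h_def algebra_simps of_nat_diff flip: scaleR_add_left)
    have "(c/2) * norm h * norm (w (real (2*m) *\<^sub>R a) - w (real (2*k) *\<^sub>R a))
        \<le> h \<bullet> (w (real (2*m) *\<^sub>R a) - w (real (2*k) *\<^sub>R a))"
      using cone[OF c P nh1, of "real (2*k) *\<^sub>R a"] xh by simp
    also have "\<dots> = norm h * (G m - G k)"
      using a by (simp add: h_def nh G_def inner_diff_right algebra_simps)
    finally have "norm h * ((c/2) * norm (w (real (2*m) *\<^sub>R a) - w (real (2*k) *\<^sub>R a))) \<le> norm h * (G m - G k)"
      by (simp only: mult.assoc[symmetric] mult.commute[of "norm h"])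
    then have "(c/2) * norm (w (real (2*m) *\<^sub>R a) - w (real (2*k) *\<^sub>R a)) \<le> G m - G k"
      by (rule mult_left_le_imp_le) (use nh1 in auto)
    then show ?thesis using c by (simp add: field_simps)
  qed
  have "Cauchy (\<lambda>k. w (real (2*k) *\<^sub>R a))"
  proof (rule CauchyI)
    fix e :: real assume e: "e > 0"
    then have "c * e / 2 > 0" using c by simp
    from CauchyD[OF CG this] obtain N where N: "\<forall>m\<ge>N. \<forall>n\<ge>N. norm (G m - G n) < c * e / 2" by blast
    have "norm (w (real (2*m) *\<^sub>R a) - w (real (2*n) *\<^sub>R a)) < e" if "m \<ge> N" "n \<ge> N" for m n
    proof (cases "n \<le> m")
      case True
      have "norm (w (real (2*m) *\<^sub>R a) - w (real (2*n) *\<^sub>R a)) \<le> (2/c) * (G m - G n)" by (rule key[OF True])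
      also have "\<dots> < (2/c) * (c * e / 2)" proof (rule mult_strict_left_mono)
        show "0 < 2 / c" using c by simp
      qed (metis N[rule_format, OF that] real_norm_def abs_less_iff)
      finally show ?thesis using c by simp
    next
      case False
      have "norm (w (real (2*m) *\<^sub>R a) - w (real (2*n) *\<^sub>R a)) = norm (w (real (2*n) *\<^sub>R a) - w (real (2*m) *\<^sub>R a))"
        by (rule norm_minus_commute)
      also have "\<dots> \<le> (2/c) * (G n - G m)" using False by (intro key) simp
      also have "\<dots> < (2/c) * (c * e / 2)" proof (rule mult_strict_left_mono)
        show "0 < 2 / c" using c by simp
      qed (metis N[rule_format, OF that(2) that(1)] real_norm_def abs_less_iff)
      finally show ?thesis using c by simp
    qed
    then show "\<exists>M. \<forall>m\<ge>M. \<forall>n\<ge>M. norm (w (real (2*m) *\<^sub>R a) - w (real (2*n) *\<^sub>R a)) < e" by blast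
  qed
  then have "convergent (\<lambda>k. w (real (2*k) *\<^sub>R a))" by (simp add: Cauchy_convergent_iff)
  then show ?thesis unfolding rayA_def by (simp add: convergent_LIMSEQ_iff)
qed

lemma pair_ineq:
  assumes a: "norm a = 1" and b: "norm b = 1"
  shows "(c/2) * norm (2 *\<^sub>R a - b) * norm (rayA w a - rayA w b)
           \<le> (2 *\<^sub>R a - b) \<bullet> (rayA w a - rayA w b)"
proof -
  have "((\<lambda>k. w (real (2*k) *\<^sub>R a)) \<circ> (\<lambda>k. 2*k)) \<longlonglongrightarrow> rayA w a"
    by (rule LIMSEQ_subseq_LIMSEQ[OF ray_conv[OF a]]) (simp add: strict_mono_def)
  moreover have "((\<lambda>k. w (real (2*k) *\<^sub>R a)) \<circ> (\<lambda>k. 2*k)) = (\<lambda>k. w (real (2*k) *\<^sub>R (2 *\<^sub>R a)))"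
    by (auto simp: o_def)
  ultimately have la: "(\<lambda>k. w (real (2*k) *\<^sub>R (2 *\<^sub>R a))) \<longlonglongrightarrow> rayA w a" by simp
  have lb: "(\<lambda>k. w (real (2*k) *\<^sub>R b)) \<longlonglongrightarrow> rayA w b" by (rule ray_conv[OF b])
  have n1: "norm (2 *\<^sub>R a - b) \<ge> 1"
    using norm_triangle_ineq2[of "2 *\<^sub>R a" b] a b by simp
  let ?D = "\<lambda>k. w (real (2*k) *\<^sub>R (2 *\<^sub>R a)) - w (real (2*k) *\<^sub>R b)"
  have ev: "\<forall>k\<ge>1. (c/2) * norm (2 *\<^sub>R a - b) * norm (?D k) \<le> (2 *\<^sub>R a - b) \<bullet> ?D k"
  proof (intro allI impI)
    fix k :: nat assume k: "k \<ge> 1"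
    define h where "h = real (2*k) *\<^sub>R (2 *\<^sub>R a - b)"
    have nh: "norm h = real (2*k) * norm (2 *\<^sub>R a - b)" by (simp add: h_def)
    have "real (2*k) * 1 \<le> real (2*k) * norm (2 *\<^sub>R a - b)"
      using n1 by (intro mult_left_mono) auto
    then have "real (2*k) \<le> norm h" using nh by simp
    moreover have "real (2*k) \<ge> 2" using k by simp
    ultimately have nh1: "norm h > 1" by linarith
    have xh: "real (2*k) *\<^sub>R b + h = real (2*k) *\<^sub>R (2 *\<^sub>R a)"
      by (simp add: h_def algebra_simps)
    have "(c/2) * norm h * norm (?D k) \<le> h \<bullet> ?D k"
      using cone[OF c P nh1, of "real (2*k) *\<^sub>R b"] xh by simp
    moreover have hD: "h \<bullet> ?D k = real (2*k) * ((2 *\<^sub>R a - b) \<bullet> ?D k)"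
      unfolding h_def by (rule inner_scaleR_left)
    ultimately have "(c/2) * (real (2*k) * norm (2 *\<^sub>R a - b)) * norm (?D k) \<le> real (2*k) * ((2 *\<^sub>R a - b) \<bullet> ?D k)"
      unfolding nh by simp
    then have "real (2*k) * ((c/2) * norm (2 *\<^sub>R a - b) * norm (?D k)) \<le> real (2*k) * ((2 *\<^sub>R a - b) \<bullet> ?D k)"
      by (simp only: mult_ac)
    then show "(c/2) * norm (2 *\<^sub>R a - b) * norm (?D k) \<le> (2 *\<^sub>R a - b) \<bullet> ?D k"
      by (rule mult_left_le_imp_le) (use k in simp)
  qed
  have "(\<lambda>k. (c/2) * norm (2 *\<^sub>R a - b) * norm (?D k)) \<longlonglongrightarrow> (c/2) * norm (2 *\<^sub>R a - b) * norm (rayA w a - rayA w b)"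
    by (intro tendsto_intros la lb)
  moreover have "(\<lambda>k. (2 *\<^sub>R a - b) \<bullet> ?D k) \<longlonglongrightarrow> (2 *\<^sub>R a - b) \<bullet> (rayA w a - rayA w b)"
    by (intro tendsto_intros la lb)
  ultimately show ?thesis by (rule LIMSEQ_le) (use ev in blast)
qed

lemma loc_const:
  assumes a: "norm a = 1" and b: "norm b = 1" and ab: "3 * norm (a - b) < c"
  shows "rayA w a = rayA w b"
proof (rule ccontr)
  assume ne: "rayA w a \<noteq> rayA w b"
  define D where "D = rayA w a - rayA w b"
  have nD: "norm D > 0" using ne by (simp add: D_def)
  have i1: "(c/2) * norm (2 *\<^sub>R a - b) * norm D \<le> (2 *\<^sub>R a - b) \<bullet> D"
    using pair_ineq[OF a b] by (simp add: D_def)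
  have i2: "(c/2) * norm (2 *\<^sub>R b - a) * norm D \<le> (a - 2 *\<^sub>R b) \<bullet> D"
  proof -
    have "(c/2) * norm (2 *\<^sub>R b - a) * norm (rayA w b - rayA w a) \<le> (2 *\<^sub>R b - a) \<bullet> (rayA w b - rayA w a)"
      by (rule pair_ineq[OF b a])
    moreover have "norm (rayA w b - rayA w a) = norm D" by (simp add: D_def norm_minus_commute)
    moreover have "(2 *\<^sub>R b - a) \<bullet> (rayA w b - rayA w a) = (a - 2 *\<^sub>R b) \<bullet> D"
      by (simp add: D_def inner_diff_left inner_diff_right algebra_simps)
    ultimately show ?thesis by simp
  qed
  have n1: "norm (2 *\<^sub>R a - b) \<ge> 1"
    using norm_triangle_ineq2[of "2 *\<^sub>R a" b] a b by simp
  have n2: "norm (2 *\<^sub>R b - a) \<ge> 1"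
    using norm_triangle_ineq2[of "2 *\<^sub>R b" a] a b by simp
  have j1: "(c/2) * norm D \<le> (c/2) * norm (2 *\<^sub>R a - b) * norm D"
    using n1 c mult_right_mono[OF mult_left_mono[OF n1, of "c/2"], of "norm D"] by simp
  have j2: "(c/2) * norm D \<le> (c/2) * norm (2 *\<^sub>R b - a) * norm D"
    using n2 c mult_right_mono[OF mult_left_mono[OF n2, of "c/2"], of "norm D"] by simp
  have "(2 *\<^sub>R a - b) \<bullet> D + (a - 2 *\<^sub>R b) \<bullet> D = 3 * ((a - b) \<bullet> D)"
    by (simp add: inner_diff_left algebra_simps)
  also have "\<dots> \<le> 3 * (norm (a - b) * norm D)"
    using norm_cauchy_schwarz[of "a - b" D] by simp
  finally have "c * norm D \<le> (3 * norm (a - b)) * norm D" using i1 i2 j1 j2 by simp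
  then have "c \<le> 3 * norm (a - b)" using nD by simp
  then show False using ab by simp
qed

lemma const_sphere:
  assumes a: "norm a = 1" and b: "norm b = 1"
  shows "rayA w a = rayA w b"
proof -
  have conn: "connected (sphere (0::real^2) 1)" by (rule connected_sphere) simp
  show ?thesis
  proof (rule connected_equivalence_relation[OF conn, where R = "\<lambda>x y. rayA w x = rayA w y"])
    show "a \<in> sphere 0 1" "b \<in> sphere 0 1" using a b by auto
  next
    fix x assume x: "x \<in> sphere (0::real^2) 1"
    show "\<exists>T. openin (top_of_set (sphere 0 1)) T \<and> x \<in> T \<and> (\<forall>y\<in>T. rayA w x = rayA w y)"
    proof (intro exI conjI)
      show "openin (top_of_set (sphere 0 1)) (sphere 0 1 \<inter> ball x (c/3))" by auto
      show "x \<in> sphere 0 1 \<inter> ball x (c/3)" using x c by auto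
      show "\<forall>y\<in>sphere 0 1 \<inter> ball x (c/3). rayA w x = rayA w y"
      proof
        fix y assume y: "y \<in> sphere 0 1 \<inter> ball x (c/3)"
        show "rayA w x = rayA w y"
          by (rule loc_const) (use x y in \<open>auto simp: dist_norm\<close>)
      qed
    qed
  qed auto
qed

lemma main_false: False
proof -
  define v :: "real^2" where "v = axis 1 1"
  have v: "norm v = 1" by (simp add: v_def)
  have mv: "norm (-v) = 1" using v by simp
  have eqA: "rayA w v = rayA w (-v)" by (rule const_sphere[OF v mv])
  define G where "G k = v \<bullet> w (real (2*k) *\<^sub>R v)" for k
  define H where "H k = (-v) \<bullet> w (real (2*k) *\<^sub>R (-v))" for k
  have iG: "incseq G" unfolding G_def[abs_def] by (rule ray_inc[OF v])
  have iH: "incseq H" unfolding H_def[abs_def] by (rule ray_inc[OF mv])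
  define \<delta> where "\<delta> = G 1 + H 1"
  have "\<delta> > 0"
  proof -
    have e: "real (2*1) *\<^sub>R v - real (2*1) *\<^sub>R (-v) = 4 *\<^sub>R v" by (simp flip: scaleR_add_left)
    have n4: "norm (4 *\<^sub>R v) > 1" using v by simp
    have "(4 *\<^sub>R v) \<bullet> (w (real (2*1) *\<^sub>R v) - w (real (2*1) *\<^sub>R (-v)))
        > c * norm (w (real (2*1) *\<^sub>R v) - w (real (2*1) *\<^sub>R (-v)))"
      using P[of "real (2*1) *\<^sub>R v" "real (2*1) *\<^sub>R (-v)"] n4 unfolding e by blast
    moreover have "c * norm (w (real (2*1) *\<^sub>R v) - w (real (2*1) *\<^sub>R (-v))) \<ge> 0" using c by simp
    ultimately have "(4 *\<^sub>R v) \<bullet> (w (real (2*1) *\<^sub>R v) - w (real (2*1) *\<^sub>R (-v))) > 0" by linarith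
    then show ?thesis by (simp add: \<delta>_def G_def H_def inner_diff_right)
  qed
  have ev: "\<forall>k\<ge>1. \<delta> \<le> G k + H k"
    using iG iH unfolding \<delta>_def incseq_def by (simp add: add_mono)
  have lG: "G \<longlonglongrightarrow> v \<bullet> rayA w v"
    unfolding G_def[abs_def] by (intro tendsto_intros ray_conv[OF v])
  have lH: "H \<longlonglongrightarrow> (-v) \<bullet> rayA w (-v)"
    unfolding H_def[abs_def] by (intro tendsto_intros ray_conv[OF mv])
  have "(\<lambda>k. G k + H k) \<longlonglongrightarrow> v \<bullet> rayA w v + (-v) \<bullet> rayA w (-v)"
    by (intro tendsto_intros lG lH)
  then have "\<delta> \<le> v \<bullet> rayA w v + (-v) \<bullet> rayA w (-v)"
    by (rule LIMSEQ_le[OF tendsto_const]) (use ev in blast)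
  then have "\<delta> \<le> 0" using eqA by simp
  then show False using \<open>\<delta> > 0\<close> by simp
qed

end

theorem theorem4:
  shows "\<not> (\<exists>w :: real^2 \<Rightarrow> real^2.
            continuous_on UNIV w \<and> bounded (range w) \<and>
            (\<exists>c > 0. \<forall>x y. norm (x - y) > 1 \<longrightarrow>
                 \<bar>(x - y) \<bullet> (w x - w y)\<bar> > c * norm (w x - w y)))"
proof
  assume "\<exists>w :: real^2 \<Rightarrow> real^2.
            continuous_on UNIV w \<and> bounded (range w) \<and>
            (\<exists>c > 0. \<forall>x y. norm (x - y) > 1 \<longrightarrow>
                 \<bar>(x - y) \<bullet> (w x - w y)\<bar> > c * norm (w x - w y))"
  then obtain w :: "real^2 \<Rightarrow> real^2" and c where cont: "continuous_on UNIV w"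
    and bd: "bounded (range w)" and c: "c > 0"
    and H: "\<And>x y. norm (x - y) > 1 \<Longrightarrow> \<bar>(x - y) \<bullet> (w x - w y)\<bar> > c * norm (w x - w y)"
    by blast
  obtain M where M: "\<And>x. norm (w x) \<le> M" using bd unfolding bounded_iff by blast
  define S where "S = (UNIV :: (real^2) set) \<times> (- cball (0::real^2) 1)"
  define f where "f = (\<lambda>p :: (real^2) \<times> (real^2). snd p \<bullet> (w (fst p + snd p) - w (fst p)))"
  have connS: "connected S" unfolding S_def
    by (intro connected_Times connected_UNIV connected_complement_bounded_convex) auto
  have contf: "continuous_on S f" unfolding f_def
    by (intro continuous_intros continuous_on_compose2[OF cont]) auto
  have Sx: "(y, x - y) \<in> S" if "norm (x - y) > 1" for x y
    using that by (simp add: S_def)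
  have fx: "f (y, x - y) = (x - y) \<bullet> (w x - w y)" for x y by (simp add: f_def)
  have nz: "f p \<noteq> 0" if "p \<in> S" for p
  proof -
    obtain x h where p: "p = (x, h)" by (cases p)
    have "norm h > 1" using that p by (simp add: S_def)
    then have "\<bar>((x + h) - x) \<bullet> (w (x + h) - w x)\<bar> > c * norm (w (x + h) - w x)"
      using H[of "x + h" x] by simp
    moreover have "c * norm (w (x + h) - w x) \<ge> 0" using c by simp
    ultimately show ?thesis by (simp add: p f_def)
  qed
  have sign: "(\<forall>p\<in>S. f p > 0) \<or> (\<forall>p\<in>S. f p < 0)"
  proof (rule ccontr)
    assume "\<not> ?thesis"
    then obtain p q where p: "p \<in> S" "f p \<le> 0" and q: "q \<in> S" "f q \<ge> 0" by force
    have "connected (f ` S)" by (rule connected_continuous_image[OF contf connS])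
    then have "0 \<in> f ` S"
      by (rule connectedD_interval) (use p q in auto)
    then show False using nz by auto
  qed
  then show False
  proof
    assume pos: "\<forall>p\<in>S. f p > 0"
    have P: "(x - y) \<bullet> (w x - w y) > c * norm (w x - w y)" if "norm (x - y) > 1" for x y
      using H[OF that] pos Sx[OF that] fx[of y x] by auto
    show False by (rule main_false[OF c P M])
  next
    assume neg: "\<forall>p\<in>S. f p < 0"
    have P: "(x - y) \<bullet> ((- w x) - (- w y)) > c * norm ((- w x) - (- w y))" if "norm (x - y) > 1" for x y
    proof -
      have "f (y, x - y) < 0" using neg Sx[OF that] by auto
      then have "(x - y) \<bullet> (w x - w y) < 0" using fx by simp
      moreover have "norm ((- w x) - (- w y)) = norm (w x - w y)"
        by (simp add: norm_minus_commute)
      moreover have "(x - y) \<bullet> ((- w x) - (- w y)) = - ((x - y) \<bullet> (w x - w y))"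
        by (simp add: inner_diff_right)
      ultimately show ?thesis using H[OF that] by auto
    qed
    have M': "norm (- w x) \<le> M" for x using M[of x] by simp
    show False by (rule main_false[OF c P M'])
  qed
qed

end
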